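(* Let $\delta\ge 0$ be a real number, $m\in\mathbb{N}$, and let $g,u,c:\mathbb{R}\to[0,\infty)$ be continuous functions. Let $\{\varepsilon_t\}_t$ be an i.i.d. sequence with mean $0$ and variance $1$, let $\{x_t\}_t$ be a strictly stationary ergodic process independent of $\{\varepsilon_t\}_t$, with $\{(\varepsilon_t,x_t)\}_t$ adapted to a filtration $\{\mathcal{F}_t\}_t$, and let $\{R_t\}_t$ be given by the model $$R_t=\sigma_t\varepsilon_t,\qquad \sigma_t^{\delta}=g(\varepsilon_{t-1})+u(x_{t-1})+c(\varepsilon_{t-1})\sigma_{t-1}^{\delta}.$$ Assume $E|\varepsilon_t|^{m\delta}<\infty$, $E(u(x_t))^{m}<\infty$ and $E(g(\varepsilon_t))^{m}<\infty$. Then the following are equivalent: (i) $E|R_t|^{m\delta}<\infty$; (ii) $E(c(\varepsilon_t))^{m}<1$.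
   Context: The functions $g,u,c$ are assumed chosen so that $P(\sigma_t>0)=1$ for every $t$. *)

theory Defs
  imports "HOL-Probability.Probability"
begin

definition strictly_stationary :: "'a measure \<Rightarrow> (int \<Rightarrow> 'a \<Rightarrow> real) \<Rightarrow> bool" where
  "strictly_stationary M X \<longleftrightarrow>
     (\<forall>h::int. \<forall>J::int set. finite J \<longrightarrow>
        distr M (PiM J (\<lambda>_. borel)) (\<lambda>\<omega>. \<lambda>j\<in>J. X (j + h) \<omega>)
      = distr M (PiM J (\<lambda>_. borel)) (\<lambda>\<omega>. \<lambda>j\<in>J. X j \<omega>))"

definition shift_path :: "(int \<Rightarrow> real) \<Rightarrow> (int \<Rightarrow> real)" where
  "shift_path f = (\<lambda>t. f (t + 1))"

definition ergodic_process :: "'a measure \<Rightarrow> (int \<Rightarrow> 'a \<Rightarrow> real) \<Rightarrow> bool" where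
  "ergodic_process M X \<longleftrightarrow>
     (\<forall>A \<in> sets (PiM (UNIV::int set) (\<lambda>_. borel)).
        shift_path -` A = A \<longrightarrow>
        measure M {\<omega> \<in> space M. (\<lambda>t. X t \<omega>) \<in> A} \<in> {0, 1})"

text \<open>The causal (non-anticipative) expansion of the model
  \<open>\<sigma>_t^\<delta> = g(\<epsilon>_{t-1}) + u(x_{t-1}) + c(\<epsilon>_{t-1}) \<sigma>_{t-1}^\<delta>\<close>: the k-th term is
  \<open>c(\<epsilon>_{t-1})\<cdots>c(\<epsilon>_{t-k}) (g(\<epsilon>_{t-k-1}) + u(x_{t-k-1}))\<close>.\<close>
definition sol_term ::
  "(real \<Rightarrow> real) \<Rightarrow> (real \<Rightarrow> real) \<Rightarrow> (real \<Rightarrow> real) \<Rightarrow>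
   (int \<Rightarrow> 'a \<Rightarrow> real) \<Rightarrow> (int \<Rightarrow> 'a \<Rightarrow> real) \<Rightarrow> int \<Rightarrow> 'a \<Rightarrow> nat \<Rightarrow> real" where
  "sol_term g u c eps x t \<omega> k =
     (\<Prod>j\<in>{1..k}. c (eps (t - int j) \<omega>)) *
     (g (eps (t - int k - 1) \<omega>) + u (x (t - int k - 1) \<omega>))"

end

theory Submission
  imports Defs
begin


lemma indep_split:
  assumes P: "prob_space M"
    and ind: "prob_space.indep_var M S E T X"
    and F: "case_prod F \<in> borel_measurable (S \<Otimes>\<^sub>M T)"
  shows "(\<integral>\<^sup>+\<omega>. F (E \<omega>) (X \<omega>) \<partial>M) = (\<integral>\<^sup>+\<omega>'. (\<integral>\<^sup>+\<omega>. F (E \<omega>) (X \<omega>') \<partial>M) \<partial>M)"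
proof -
  interpret prob_space M by (rule P)
  have rv[measurable]: "E \<in> measurable M S" "X \<in> measurable M T"
    using ind by (auto dest: indep_var_rv1 indep_var_rv2)
  have eq: "distr M S E \<Otimes>\<^sub>M distr M T X = distr M (S \<Otimes>\<^sub>M T) (\<lambda>\<omega>. (E \<omega>, X \<omega>))"
    using ind indep_var_distribution_eq by blast
  interpret pp: pair_prob_space "distr M S E" "distr M T X"
    by (simp add: pair_prob_space.intro pair_sigma_finite.intro prob_space_distr prob_space_imp_sigma_finite)
  have F'[measurable]: "case_prod F \<in> borel_measurable (distr M S E \<Otimes>\<^sub>M distr M T X)"
    using F by (subst measurable_cong_sets[OF sets_pair_measure_cong[OF sets_distr sets_distr] refl])
  have "(\<lambda>(y, \<omega>). F (E \<omega>) y) \<in> borel_measurable (T \<Otimes>\<^sub>M M)"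
    using F by measurable
  then have mm: "(\<lambda>y. \<integral>\<^sup>+\<omega>. F (E \<omega>) y \<partial>M) \<in> borel_measurable T"
    using sigma_finite_measure.borel_measurable_nn_integral[of M "\<lambda>y \<omega>. F (E \<omega>) y" T]
    by (simp add: sigma_finite_measure_axioms)
  have "(\<integral>\<^sup>+\<omega>. F (E \<omega>) (X \<omega>) \<partial>M) = (\<integral>\<^sup>+z. case_prod F z \<partial>distr M (S \<Otimes>\<^sub>M T) (\<lambda>\<omega>. (E \<omega>, X \<omega>)))"
    using F by (subst nn_integral_distr) auto
  also have "\<dots> = (\<integral>\<^sup>+z. case_prod F z \<partial>(distr M S E \<Otimes>\<^sub>M distr M T X))"
    by (simp add: eq)
  also have "\<dots> = (\<integral>\<^sup>+y. (\<integral>\<^sup>+x. F x y \<partial>distr M S E) \<partial>distr M T X)"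
    using pp.nn_integral_snd[OF F'] by simp
  also have "\<dots> = (\<integral>\<^sup>+y. (\<integral>\<^sup>+\<omega>. F (E \<omega>) y \<partial>M) \<partial>distr M T X)"
    apply (rule nn_integral_cong)
    apply (subst nn_integral_distr)
    using F by auto
  also have "\<dots> = (\<integral>\<^sup>+\<omega>'. (\<integral>\<^sup>+\<omega>. F (E \<omega>) (X \<omega>') \<partial>M) \<partial>M)"
    using mm by (subst nn_integral_distr) auto
  finally show ?thesis .
qed



lemma id_int:
  assumes P: "prob_space M" and rv: "\<And>s. eps s \<in> borel_measurable M"
    and eps_id: "\<And>s. distr M borel (eps s) = distr M borel (eps 0)"
    and f: "f \<in> borel_measurable borel"
  shows "(\<integral>\<^sup>+\<omega>. f (eps i \<omega>) \<partial>M) = (\<integral>\<^sup>+\<omega>. f (eps j \<omega>) \<partial>M)"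
proof -
  have "(\<integral>\<^sup>+\<omega>. f (eps i \<omega>) \<partial>M) = (\<integral>\<^sup>+y. f y \<partial>distr M borel (eps i))"
    using rv f by (subst nn_integral_distr) auto
  also have "\<dots> = (\<integral>\<^sup>+y. f y \<partial>distr M borel (eps j))" by (simp add: eps_id[of i] eps_id[of j])
  also have "\<dots> = (\<integral>\<^sup>+\<omega>. f (eps j \<omega>) \<partial>M)"
    using rv f by (subst nn_integral_distr) auto
  finally show ?thesis .
qed

lemma eps_prod:
  fixes eps :: "int \<Rightarrow> 'a \<Rightarrow> real"
  assumes P: "prob_space M" and rv: "\<And>s. eps s \<in> borel_measurable M"
    and ind: "prob_space.indep_vars M (\<lambda>_. borel) eps UNIV"
    and eps_id: "\<And>s. distr M borel (eps s) = distr M borel (eps 0)"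
    and c: "c \<in> borel_measurable borel" "\<And>y. c y \<ge> 0"
    and ph: "ph \<in> borel_measurable borel" "\<And>y. ph y \<ge> 0"
    and ps: "ps \<in> borel_measurable borel" "\<And>y. ps y \<ge> 0"
  shows "(\<integral>\<^sup>+\<omega>. ennreal ((\<Prod>j\<in>{1..k}. c (eps (t - int j) \<omega>)) * ph (eps (t - int k - 1) \<omega>) * ps (eps t \<omega>)) \<partial>M)
     = (\<integral>\<^sup>+\<omega>. ennreal (c (eps t \<omega>)) \<partial>M) ^ k * (\<integral>\<^sup>+\<omega>. ennreal (ph (eps (t - int k - 1) \<omega>)) \<partial>M)
       * (\<integral>\<^sup>+\<omega>. ennreal (ps (eps t \<omega>)) \<partial>M)"
proof -
  interpret prob_space M by (rule P)
  define s where "s = t - int k - 1"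
  define I where "I = {s..t}"
  define h where "h i = (if i = t then ps else if i = s then ph else c)" for i
  define R where "R i \<omega> = h i (eps i \<omega>)" for i \<omega>
  define Y where "Y i \<omega> = ennreal (h i (eps i \<omega>))" for i \<omega>
  have hm: "(\<lambda>y. ennreal (h i y)) \<in> borel_measurable borel" for i using c ph ps by (auto simp: h_def)
  have hpos: "h i y \<ge> 0" for i y using c ph ps by (auto simp: h_def)
  have indY: "indep_vars (\<lambda>_. borel) Y I"
    unfolding Y_def
    by (rule indep_vars_compose2[OF indep_vars_subset[OF ind] hm]) auto
  have fin: "finite I" by (simp add: I_def)
  have Iset: "I = insert s (insert t {t - int k..t - 1})" by (auto simp: I_def s_def)
  have st: "s \<noteq> t" "s \<notin> {t - int k..t - 1}" "t \<notin> {t - int k..t - 1}" by (auto simp: s_def)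
  have img: "(\<lambda>j. t - int j) ` {1..k} = {t - int k..t - 1}"
  proof
    show "{t - int k..t - 1} \<subseteq> (\<lambda>j. t - int j) ` {1..k}"
    proof
      fix i assume "i \<in> {t - int k..t - 1}"
      then show "i \<in> (\<lambda>j. t - int j) ` {1..k}"
        by (intro image_eqI[of _ _ "nat (t - i)"]) auto
    qed
  qed auto
  have inj: "inj_on (\<lambda>j. t - int j) {1..k}" by (auto simp: inj_on_def)
  have prodR: "(\<Prod>i\<in>I. R i \<omega>) = (\<Prod>j\<in>{1..k}. c (eps (t - int j) \<omega>)) * ph (eps (t - int k - 1) \<omega>) * ps (eps t \<omega>)" for \<omega>
  proof -
    have "(\<Prod>i\<in>{t - int k..t - 1}. R i \<omega>) = (\<Prod>i\<in>{t - int k..t - 1}. c (eps i \<omega>))"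
      using st by (intro prod.cong) (auto simp: R_def h_def)
    also have "\<dots> = (\<Prod>j\<in>{1..k}. c (eps (t - int j) \<omega>))"
      by (subst img[symmetric], subst prod.reindex[OF inj]) simp
    finally show ?thesis using st
      by (simp add: Iset R_def h_def s_def mult_ac)
  qed
  have prodY: "(\<Prod>i\<in>I. Y i \<omega>) = ennreal (\<Prod>i\<in>I. R i \<omega>)" for \<omega>
    unfolding Y_def R_def by (rule prod_ennreal) (simp add: hpos)
  have "(\<integral>\<^sup>+\<omega>. ennreal ((\<Prod>j\<in>{1..k}. c (eps (t - int j) \<omega>)) * ph (eps (t - int k - 1) \<omega>) * ps (eps t \<omega>)) \<partial>M)
      = (\<integral>\<^sup>+\<omega>. (\<Prod>i\<in>I. Y i \<omega>) \<partial>M)" by (simp add: prodY prodR)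
  also have "\<dots> = (\<Prod>i\<in>I. \<integral>\<^sup>+\<omega>. Y i \<omega> \<partial>M)"
    using indep_vars_nn_integral[OF fin indY] by (simp add: Y_def)
  also have "\<dots> = (\<Prod>i\<in>{t - int k..t - 1}. \<integral>\<^sup>+\<omega>. Y i \<omega> \<partial>M)
       * (\<integral>\<^sup>+\<omega>. ennreal (ph (eps (t - int k - 1) \<omega>)) \<partial>M) * (\<integral>\<^sup>+\<omega>. ennreal (ps (eps t \<omega>)) \<partial>M)"
    using st by (simp add: Iset Y_def h_def s_def mult_ac)
  also have "(\<Prod>i\<in>{t - int k..t - 1}. \<integral>\<^sup>+\<omega>. Y i \<omega> \<partial>M) = (\<Prod>i\<in>{t - int k..t - 1}. \<integral>\<^sup>+\<omega>. ennreal (c (eps t \<omega>)) \<partial>M)"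
  proof (intro prod.cong refl)
    fix i assume "i \<in> {t - int k..t - 1}"
    then have "Y i = (\<lambda>\<omega>. ennreal (c (eps i \<omega>)))" using st by (auto simp: Y_def h_def fun_eq_iff)
    then show "(\<integral>\<^sup>+\<omega>. Y i \<omega> \<partial>M) = (\<integral>\<^sup>+\<omega>. ennreal (c (eps t \<omega>)) \<partial>M)"
      using id_int[of M eps "\<lambda>y. ennreal (c y)" i t] P rv eps_id c by simp
  qed
  also have "\<dots> = (\<integral>\<^sup>+\<omega>. ennreal (c (eps t \<omega>)) \<partial>M) ^ k" by simp
  finally show ?thesis .
qed



lemma superadd_pow:
  fixes a b :: real assumes "a \<ge> 0" "b \<ge> 0" "m \<ge> 1"
  shows "a ^ m + b ^ m \<le> (a + b) ^ m"
proof -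
  obtain m' where m: "m = Suc m'" using assms(3) by (cases m) auto
  have "a * a ^ m' \<le> a * (a + b) ^ m'" using assms by (intro mult_left_mono power_mono) auto
  moreover have "b * b ^ m' \<le> b * (a + b) ^ m'" using assms by (intro mult_left_mono power_mono) auto
  ultimately show ?thesis by (simp add: m algebra_simps)
qed

lemma superadd_sum:
  fixes T :: "nat \<Rightarrow> real" assumes "\<And>k. T k \<ge> 0" "m \<ge> 1"
  shows "(\<Sum>k<N. T k ^ m) \<le> (\<Sum>k<N. T k) ^ m"
proof (induction N)
  case 0 then show ?case using assms by (simp add: power_0_left)
next
  case (Suc N)
  have "(\<Sum>k<Suc N. T k ^ m) \<le> (\<Sum>k<N. T k) ^ m + T N ^ m" using Suc by simp
  also have "\<dots> \<le> ((\<Sum>k<N. T k) + T N) ^ m"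
    using assms by (intro superadd_pow sum_nonneg) auto
  finally show ?case by simp
qed

lemma lower_pt:
  fixes T :: "nat \<Rightarrow> real" assumes T: "\<And>k. T k \<ge> 0" "T sums S" and m: "m \<ge> 1"
  shows "(\<Sum>k. ennreal (T k ^ m)) \<le> ennreal (S ^ m)"
proof (rule suminf_le_const)
  show "summable (\<lambda>k. ennreal (T k ^ m))" by simp
  fix N
  have "(\<Sum>k<N. T k ^ m) \<le> (\<Sum>k<N. T k) ^ m" by (rule superadd_sum[OF T(1) m])
  also have "\<dots> \<le> S ^ m"
    using T by (intro power_mono) (auto simp: sums_iff sum_nonneg intro!: sum_le_suminf)
  finally show "(\<Sum>k<N. ennreal (T k ^ m)) \<le> ennreal (S ^ m)"
    using T(1) by (subst sum_ennreal) (auto intro: ennreal_leI)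
qed

lemma upper_fin:
  fixes T :: "nat \<Rightarrow> real" assumes T: "\<And>k. T k \<ge> 0" and m: "m \<ge> 1" and r: "0 < r" "r < 1"
  shows "(\<Sum>k<N. T k) ^ m \<le> (1 / (1 - r)) ^ (m - 1) * (\<Sum>k<N. T k ^ m / r ^ (k * (m - 1)))"
proof (cases "N = 0")
  case True then show ?thesis using m by (simp add: power_0_left)
next
  case False
  obtain m' where mm: "m = Suc m'" using m by (cases m) auto
  define W where "W = (\<Sum>k<N. r ^ k)"
  have Wpos: "W > 0" unfolding W_def using False r
    by (intro sum_pos) auto
  have Wle: "W \<le> 1 / (1 - r)"
  proof -
    have "W = (1 - r ^ N) / (1 - r)" unfolding W_def using r by (simp add: sum_gp_strict)
    also have "\<dots> \<le> 1 / (1 - r)" using r by (intro divide_right_mono) auto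
    finally show ?thesis .
  qed
  have cv: "convex_on {0::real..} (\<lambda>x. x ^ m)"
    by (cases "even m") (auto intro: convex_on_subset[OF convex_power_even] convex_power_odd)
  have "(\<Sum>k<N. T k) = (\<Sum>k<N. (r ^ k / W) *\<^sub>R (T k * W / r ^ k))"
    using Wpos r by (intro sum.cong) auto
  then have "(\<Sum>k<N. T k) ^ m \<le> (\<Sum>k<N. (r ^ k / W) * (T k * W / r ^ k) ^ m)"
    using convex_on_sum[OF _ _ cv, of "{..<N}" "\<lambda>k. r ^ k / W" "\<lambda>k. T k * W / r ^ k"] False Wpos r T
    by (auto simp: W_def sum_divide_distrib[symmetric])
  also have "\<dots> = W ^ m' * (\<Sum>k<N. T k ^ m / r ^ (k * (m - 1)))"
    unfolding sum_distrib_left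
    using Wpos r by (intro sum.cong) (auto simp: mm power_mult_distrib power_divide power_mult field_simps)
  also have "\<dots> \<le> (1 / (1 - r)) ^ (m - 1) * (\<Sum>k<N. T k ^ m / r ^ (k * (m - 1)))"
    using Wpos Wle T r by (intro mult_right_mono) (auto simp: mm intro!: power_mono sum_nonneg)
  finally show ?thesis .
qed



lemma upper_pt:
  fixes T :: "nat \<Rightarrow> real" assumes T: "\<And>k. T k \<ge> 0" "T sums S" and m: "m \<ge> 1" and r: "0 < r" "r < 1"
  shows "ennreal (S ^ m) \<le> ennreal ((1 / (1 - r)) ^ (m - 1)) * (\<Sum>k. ennreal (T k ^ m * (1 / r) ^ (k * (m - 1))))"
proof -
  define f where "f k = T k ^ m * (1 / r) ^ (k * (m - 1))" for k
  define K where "K = (1 / (1 - r)) ^ (m - 1)"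
  have fpos: "f k \<ge> 0" for k using T r by (simp add: f_def)
  have Kpos: "K > 0" using r by (simp add: K_def)
  have fin: "(\<Sum>k<N. T k) ^ m \<le> K * (\<Sum>k<N. f k)" for N
    using upper_fin[OF T(1) m r, where N=N] by (simp add: K_def f_def power_divide power_one_over)
  show ?thesis
  proof (cases "(\<Sum>k. ennreal (f k)) = top")
    case True
    have "(\<Sum>k. ennreal (T k ^ m * (1 / r) ^ (k * (m - 1)))) = top" using True by (simp add: f_def)
    then show ?thesis using Kpos r unfolding K_def by (simp add: ennreal_mult_top)
  next
    case False
    then have sf: "summable f" using summable_suminf_not_top fpos by blast
    have lim: "(\<lambda>N. (\<Sum>k<N. T k) ^ m) \<longlonglongrightarrow> S ^ m"
      using T(2) unfolding sums_def by (intro tendsto_power)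
    have "S ^ m \<le> K * suminf f"
    proof (rule LIMSEQ_le_const2[OF lim], intro exI allI impI)
      fix N show "(\<Sum>k<N. T k) ^ m \<le> K * suminf f"
      proof -
        have "sum f {..<N} \<le> suminf f" using sf fpos by (intro sum_le_suminf) auto
        then have "K * sum f {..<N} \<le> K * suminf f" using Kpos by (intro mult_left_mono) auto
        then show ?thesis using fin[of N] by linarith
      qed
    qed
    then have "ennreal (S ^ m) \<le> ennreal (K * suminf f)" by (rule ennreal_leI)
    also have "\<dots> = ennreal K * (\<Sum>k. ennreal (f k))"
      using Kpos fpos sf by (simp add: ennreal_mult suminf_ennreal2 suminf_nonneg)
    finally show ?thesis by (simp add: f_def K_def)
  qed
qed

lemma geom_ennreal:
  fixes z :: real assumes "0 \<le> z" "z < 1"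
  shows "(\<Sum>k. ennreal (z ^ k)) < top"
  using assms by (subst suminf_ennreal2) auto

lemma powr_pow_eq:
  fixes a d :: real assumes "a \<ge> 0" "m \<ge> 1"
  shows "(a powr d) ^ m = a powr (real m * d)"
proof (cases "a = 0")
  case True then show ?thesis using assms by (simp add: power_0_left)
next
  case False
  then have "(a powr d) ^ m = (a powr d) powr (real m)" using assms by (simp add: powr_realpow)
  also have "\<dots> = a powr (real m * d)" by (simp add: powr_powr mult.commute)
  finally show ?thesis .
qed

lemma pow_bound:
  fixes a b :: real assumes "a \<ge> 0" "b \<ge> 0"
  shows "(a + b) ^ m \<le> 2 ^ m * (a ^ m + b ^ m)"
proof -
  have "(a + b) ^ m \<le> (2 * max a b) ^ m" using assms by (intro power_mono) auto
  also have "\<dots> = 2 ^ m * max a b ^ m" by (simp add: power_mult_distrib)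
  also have "max a b ^ m \<le> a ^ m + b ^ m" using assms by (cases "a \<le> b") (auto simp: max_def)
  then have "2 ^ m * max a b ^ m \<le> 2 ^ m * (a ^ m + b ^ m)" by simp
  finally show ?thesis .
qed

lemma stat_dist:
  assumes st: "strictly_stationary M x" and rv: "\<And>s. x s \<in> borel_measurable M"
  shows "distr M borel (x s) = distr M borel (x 0)"
proof -
  have e: "distr M (PiM {0} (\<lambda>_. borel)) (\<lambda>\<omega>. \<lambda>j\<in>{0::int}. x (j + s) \<omega>)
      = distr M (PiM {0} (\<lambda>_. borel)) (\<lambda>\<omega>. \<lambda>j\<in>{0::int}. x j \<omega>)"
    using st unfolding strictly_stationary_def by auto
  have m1: "(\<lambda>\<omega>. \<lambda>j\<in>{0::int}. x (j + s) \<omega>) \<in> measurable M (PiM {0} (\<lambda>_. borel))"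
    using rv by measurable
  have m2: "(\<lambda>\<omega>. \<lambda>j\<in>{0::int}. x j \<omega>) \<in> measurable M (PiM {0} (\<lambda>_. borel))"
    using rv by measurable
  have pm: "(\<lambda>f. f 0) \<in> measurable (PiM {0::int} (\<lambda>_. borel)) (borel :: real measure)"
    by measurable
  have "distr M borel (x s) = distr (distr M (PiM {0} (\<lambda>_. borel)) (\<lambda>\<omega>. \<lambda>j\<in>{0::int}. x (j + s) \<omega>)) borel (\<lambda>f. f 0)"
    using m1 pm by (subst distr_distr) (auto simp: comp_def)
  also have "\<dots> = distr (distr M (PiM {0} (\<lambda>_. borel)) (\<lambda>\<omega>. \<lambda>j\<in>{0::int}. x j \<omega>)) borel (\<lambda>f. f 0)"
    by (simp only: e)
  also have "\<dots> = distr M borel (x 0)"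
    using m2 pm by (subst distr_distr) (auto simp: comp_def)
  finally show ?thesis .
qed


theorem proposition3p3:
  fixes M :: "'a measure"
    and F :: "int \<Rightarrow> 'a measure"
    and eps x sigma R :: "int \<Rightarrow> 'a \<Rightarrow> real"
    and g u c :: "real \<Rightarrow> real"
    and \<delta> :: real and m :: nat and t :: int
  assumes P: "prob_space M"
    and delta: "\<delta> > 0"
    and m: "m \<ge> 1"
    and cont: "continuous_on UNIV g" "continuous_on UNIV u" "continuous_on UNIV c"
    and nonneg: "\<And>y. g y \<ge> 0" "\<And>y. u y \<ge> 0" "\<And>y. c y \<ge> 0"
    \<comment> \<open>\<open>\<epsilon>\<close> i.i.d. with mean 0 and variance 1\<close>
    and eps_rv: "\<And>s. eps s \<in> borel_measurable M"
    and eps_indep: "prob_space.indep_vars M (\<lambda>_. borel) eps UNIV"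
    and eps_id: "\<And>s. distr M borel (eps s) = distr M borel (eps 0)"
    and eps_int: "\<And>s. integrable M (eps s)" "\<And>s. integrable M (\<lambda>\<omega>. (eps s \<omega>)\<^sup>2)"
    and eps_mean: "\<And>s. (\<integral>\<omega>. eps s \<omega> \<partial>M) = 0"
    and eps_var: "\<And>s. (\<integral>\<omega>. (eps s \<omega>)\<^sup>2 \<partial>M) = 1"
    \<comment> \<open>\<open>x\<close> strictly stationary, ergodic, independent of \<open>\<epsilon>\<close>\<close>
    and x_rv: "\<And>s. x s \<in> borel_measurable M"
    and x_stat: "strictly_stationary M x"
    and x_erg: "ergodic_process M x"
    and indep_eps_x: "prob_space.indep_var M
          (PiM (UNIV::int set) (\<lambda>_. borel)) (\<lambda>\<omega> s. eps s \<omega>)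
          (PiM (UNIV::int set) (\<lambda>_. borel)) (\<lambda>\<omega> s. x s \<omega>)"
    \<comment> \<open>\<open>(\<epsilon>_t, x_t)\<close> adapted to a filtration \<open>F\<close>\<close>
    and filt_sub: "\<And>s. subalgebra M (F s)"
    and filt_mono: "\<And>s s'. s \<le> s' \<Longrightarrow> sets (F s) \<subseteq> sets (F s')"
    and adapted: "\<And>s. eps s \<in> borel_measurable (F s)" "\<And>s. x s \<in> borel_measurable (F s)"
    \<comment> \<open>the model \<open>R_t = \<sigma>_t \<epsilon>_t\<close>, with \<open>\<sigma>_t^\<delta>\<close> the non-anticipative solution of the recursion\<close>
    and R_def: "\<And>s \<omega>. R s \<omega> = sigma s \<omega> * eps s \<omega>"
    and sigma_pos: "\<And>s. AE \<omega> in M. sigma s \<omega> > 0"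
    and recursion: "\<And>s. AE \<omega> in M. sigma s \<omega> powr \<delta>
          = g (eps (s - 1) \<omega>) + u (x (s - 1) \<omega>) + c (eps (s - 1) \<omega>) * sigma (s - 1) \<omega> powr \<delta>"
    and solution: "\<And>s. AE \<omega> in M. sol_term g u c eps x s \<omega> sums (sigma s \<omega> powr \<delta>)"
    \<comment> \<open>moment assumptions\<close>
    and mom_eps: "\<And>s. (\<integral>\<^sup>+\<omega>. ennreal (\<bar>eps s \<omega>\<bar> powr (real m * \<delta>)) \<partial>M) < \<infinity>"
    and mom_u: "\<And>s. (\<integral>\<^sup>+\<omega>. ennreal ((u (x s \<omega>)) ^ m) \<partial>M) < \<infinity>"
    and mom_g: "\<And>s. (\<integral>\<^sup>+\<omega>. ennreal ((g (eps s \<omega>)) ^ m) \<partial>M) < \<infinity>"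
  shows "(\<integral>\<^sup>+\<omega>. ennreal (\<bar>R t \<omega>\<bar> powr (real m * \<delta>)) \<partial>M) < \<infinity>
     \<longleftrightarrow> (\<integral>\<^sup>+\<omega>. ennreal ((c (eps t \<omega>)) ^ m) \<partial>M) < 1"
  proof -
  interpret prob_space M by (rule P)
  have gm[measurable]: "g \<in> borel_measurable borel" using cont(1) by (rule borel_measurable_continuous_onI)
  have um[measurable]: "u \<in> borel_measurable borel" using cont(2) by (rule borel_measurable_continuous_onI)
  have cm[measurable]: "c \<in> borel_measurable borel" using cont(3) by (rule borel_measurable_continuous_onI)
  note eps_rv[measurable] x_rv[measurable]
  define D where "D \<omega> = \<bar>eps t \<omega>\<bar> powr \<delta>" for \<omega>
  define T where "T k \<omega> = sol_term g u c eps x t \<omega> k * D \<omega>" for k \<omega>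
  define Q where "Q = (\<integral>\<^sup>+\<omega>. ennreal (c (eps t \<omega>) ^ m) \<partial>M)"
  define MU where "MU = (\<integral>\<^sup>+\<omega>. ennreal (\<bar>eps t \<omega>\<bar> powr (real m * \<delta>)) \<partial>M)"
  define A where "A = (\<integral>\<^sup>+\<omega>'. (\<integral>\<^sup>+\<omega>. ennreal ((g (eps 0 \<omega>) + u (x 0 \<omega>')) ^ m) \<partial>M) \<partial>M)"
  have solpos: "sol_term g u c eps x t \<omega> k \<ge> 0" for \<omega> k
    using nonneg by (auto simp: sol_term_def intro!: prod_nonneg add_nonneg_nonneg mult_nonneg_nonneg)
  have Tpos: "T k \<omega> \<ge> 0" for k \<omega> using solpos by (simp add: T_def D_def)
  have Tm[measurable]: "T k \<in> borel_measurable M" for k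
    unfolding T_def D_def sol_term_def by measurable
  have Bm: "(\<lambda>y. \<integral>\<^sup>+\<omega>. ennreal ((g (eps s' \<omega>) + u y) ^ m) \<partial>M) \<in> borel_measurable borel" for s'
  proof -
    have "(\<lambda>(y, \<omega>). ennreal ((g (eps s' \<omega>) + u y) ^ m)) \<in> borel_measurable (borel \<Otimes>\<^sub>M M)"
      by measurable
    then show ?thesis
      using sigma_finite_measure.borel_measurable_nn_integral[of M "\<lambda>y \<omega>. ennreal ((g (eps s' \<omega>) + u y) ^ m)" borel]
      by (simp add: sigma_finite_measure_axioms)
  qed
  have ET: "(\<integral>\<^sup>+\<omega>. ennreal (T k \<omega> ^ m) \<partial>M) = Q ^ k * A * MU" for k
  proof -
    define s where "s = t - int k - 1"
    define F where "F e \<xi> = ennreal ((\<Prod>j\<in>{1..k}. c (e (t - int j)) ^ m) * (g (e s) + u (\<xi> s)) ^ m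
        * \<bar>e t\<bar> powr (real m * \<delta>))" for e \<xi> :: "int \<Rightarrow> real"
    have Tk: "T k \<omega> ^ m = (\<Prod>j\<in>{1..k}. c (eps (t - int j) \<omega>) ^ m) * (g (eps s \<omega>) + u (x s \<omega>)) ^ m
        * \<bar>eps t \<omega>\<bar> powr (real m * \<delta>)" for \<omega>
      using m by (simp add: T_def D_def sol_term_def s_def power_mult_distrib prod_power_distrib powr_pow_eq)
    have Fm: "case_prod F \<in> borel_measurable (PiM UNIV (\<lambda>_. borel) \<Otimes>\<^sub>M PiM UNIV (\<lambda>_. borel))"
      unfolding F_def by measurable
    have "(\<integral>\<^sup>+\<omega>. ennreal (T k \<omega> ^ m) \<partial>M) = (\<integral>\<^sup>+\<omega>. F (\<lambda>s. eps s \<omega>) (\<lambda>s. x s \<omega>) \<partial>M)"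
      by (simp add: Tk F_def)
    also have "\<dots> = (\<integral>\<^sup>+\<omega>'. (\<integral>\<^sup>+\<omega>. F (\<lambda>s. eps s \<omega>) (\<lambda>s. x s \<omega>') \<partial>M) \<partial>M)"
      by (rule indep_split[OF P indep_eps_x Fm])
    also have "\<dots> = (\<integral>\<^sup>+\<omega>'. (Q ^ k * MU) * (\<integral>\<^sup>+\<omega>. ennreal ((g (eps s \<omega>) + u (x s \<omega>')) ^ m) \<partial>M) \<partial>M)"
    proof (rule nn_integral_cong)
      fix \<omega>'
      have "(\<integral>\<^sup>+\<omega>. F (\<lambda>s. eps s \<omega>) (\<lambda>s. x s \<omega>') \<partial>M) = (\<integral>\<^sup>+\<omega>. ennreal ((\<Prod>j\<in>{1..k}. c (eps (t - int j) \<omega>) ^ m)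
          * (g (eps (t - int k - 1) \<omega>) + u (x s \<omega>')) ^ m * \<bar>eps t \<omega>\<bar> powr (real m * \<delta>)) \<partial>M)"
        by (simp add: F_def s_def)
      also have "\<dots> = (\<integral>\<^sup>+\<omega>. ennreal (c (eps t \<omega>) ^ m) \<partial>M) ^ k
          * (\<integral>\<^sup>+\<omega>. ennreal ((g (eps (t - int k - 1) \<omega>) + u (x s \<omega>')) ^ m) \<partial>M)
          * (\<integral>\<^sup>+\<omega>. ennreal (\<bar>eps t \<omega>\<bar> powr (real m * \<delta>)) \<partial>M)"
      proof -
        have m1: "(\<lambda>y. c y ^ m) \<in> borel_measurable borel" by measurable
        have m2: "(\<lambda>y. (g y + u (x s \<omega>')) ^ m) \<in> borel_measurable borel" by measurable
        have m3: "(\<lambda>y. \<bar>y\<bar> powr (real m * \<delta>)) \<in> borel_measurable (borel :: real measure)" by measurable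
        show ?thesis
          by (rule eps_prod[OF P eps_rv eps_indep eps_id m1 _ m2 _ m3]) (simp_all add: nonneg)
      qed
      finally show "(\<integral>\<^sup>+\<omega>. F (\<lambda>s. eps s \<omega>) (\<lambda>s. x s \<omega>') \<partial>M)
          = (Q ^ k * MU) * (\<integral>\<^sup>+\<omega>. ennreal ((g (eps s \<omega>) + u (x s \<omega>')) ^ m) \<partial>M)"
        by (simp add: Q_def MU_def s_def mult_ac)
    qed
    also have "\<dots> = (Q ^ k * MU) * (\<integral>\<^sup>+\<omega>'. (\<integral>\<^sup>+\<omega>. ennreal ((g (eps s \<omega>) + u (x s \<omega>')) ^ m) \<partial>M) \<partial>M)"
      using measurable_compose[OF x_rv Bm] by (rule nn_integral_cmult)
    also have "(\<integral>\<^sup>+\<omega>'. (\<integral>\<^sup>+\<omega>. ennreal ((g (eps s \<omega>) + u (x s \<omega>')) ^ m) \<partial>M) \<partial>M)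
        = (\<integral>\<^sup>+\<omega>'. (\<integral>\<^sup>+\<omega>. ennreal ((g (eps 0 \<omega>) + u (x s \<omega>')) ^ m) \<partial>M) \<partial>M)"
    proof (rule nn_integral_cong)
      fix \<omega>'
      show "(\<integral>\<^sup>+\<omega>. ennreal ((g (eps s \<omega>) + u (x s \<omega>')) ^ m) \<partial>M) = (\<integral>\<^sup>+\<omega>. ennreal ((g (eps 0 \<omega>) + u (x s \<omega>')) ^ m) \<partial>M)"
        using id_int[of M eps "\<lambda>e. ennreal ((g e + u (x s \<omega>')) ^ m)" s 0] P eps_rv eps_id by simp
    qed
    also have "\<dots> = A"
      unfolding A_def
      using id_int[of M x "\<lambda>y. \<integral>\<^sup>+\<omega>. ennreal ((g (eps 0 \<omega>) + u y) ^ m) \<partial>M" s 0] P x_rv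
        stat_dist[OF x_stat x_rv] Bm by simp
    finally show ?thesis by (simp add: mult_ac)
  qed
  define S where "S \<omega> = sigma t \<omega> powr \<delta> * D \<omega>" for \<omega>
  have AE1: "AE \<omega> in M. (\<lambda>k. T k \<omega>) sums S \<omega> \<and> \<bar>R t \<omega>\<bar> powr (real m * \<delta>) = S \<omega> ^ m \<and> sigma t \<omega> > 0"
    using solution[of t] sigma_pos[of t]
  proof eventually_elim
    case (elim \<omega>)
    have sums: "(\<lambda>k. T k \<omega>) sums S \<omega>" unfolding T_def S_def using elim(1) by (rule sums_mult2)
    have "\<bar>R t \<omega>\<bar> powr (real m * \<delta>) = (sigma t \<omega> * \<bar>eps t \<omega>\<bar>) powr (real m * \<delta>)"
      using elim(2) by (simp add: R_def abs_mult)
    also have "\<dots> = sigma t \<omega> powr (real m * \<delta>) * \<bar>eps t \<omega>\<bar> powr (real m * \<delta>)"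
      by (simp add: powr_mult)
    also have "\<dots> = S \<omega> ^ m"
      using elim(2) m by (simp add: S_def D_def power_mult_distrib powr_pow_eq)
    finally show ?case using sums elim(2) by simp
  qed
  have LHS: "(\<integral>\<^sup>+\<omega>. ennreal (\<bar>R t \<omega>\<bar> powr (real m * \<delta>)) \<partial>M) = (\<integral>\<^sup>+\<omega>. ennreal (S \<omega> ^ m) \<partial>M)"
  proof (rule nn_integral_cong_AE)
    show "AE \<omega> in M. ennreal (\<bar>R t \<omega>\<bar> powr (real m * \<delta>)) = ennreal (S \<omega> ^ m)"
      using AE1 by eventually_elim simp
  qed
  have lower: "(\<Sum>k. Q ^ k * A * MU) \<le> (\<integral>\<^sup>+\<omega>. ennreal (S \<omega> ^ m) \<partial>M)"
  proof -
    have "(\<Sum>k. Q ^ k * A * MU) = (\<Sum>k. \<integral>\<^sup>+\<omega>. ennreal (T k \<omega> ^ m) \<partial>M)" by (simp add: ET)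
    also have "\<dots> = (\<integral>\<^sup>+\<omega>. (\<Sum>k. ennreal (T k \<omega> ^ m)) \<partial>M)"
      by (rule nn_integral_suminf[symmetric]) simp
    also have "\<dots> \<le> (\<integral>\<^sup>+\<omega>. ennreal (S \<omega> ^ m) \<partial>M)"
    proof (rule nn_integral_mono_AE)
      show "AE \<omega> in M. (\<Sum>k. ennreal (T k \<omega> ^ m)) \<le> ennreal (S \<omega> ^ m)"
        using AE1
      proof eventually_elim
        case (elim \<omega>)
        have "(\<lambda>k. T k \<omega>) sums S \<omega>" using elim by blast
        then show ?case by (rule lower_pt[OF Tpos _ m])
      qed
    qed
    finally show ?thesis .
  qed
  have MU_fin: "MU < \<infinity>" using mom_eps[of t] by (simp add: MU_def)
  have A_fin: "A < \<infinity>"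
  proof -
    define G where "G = (\<integral>\<^sup>+\<omega>. ennreal (g (eps 0 \<omega>) ^ m) \<partial>M)"
    define U where "U = (\<integral>\<^sup>+\<omega>. ennreal (u (x 0 \<omega>) ^ m) \<partial>M)"
    have pt: "ennreal ((g e + u y) ^ m) \<le> ennreal (2 ^ m) * (ennreal (g e ^ m) + ennreal (u y ^ m))" for e y
    proof -
      have "(g e + u y) ^ m \<le> 2 ^ m * (g e ^ m + u y ^ m)" by (rule pow_bound) (simp_all add: nonneg)
      then have "ennreal ((g e + u y) ^ m) \<le> ennreal (2 ^ m * (g e ^ m + u y ^ m))" by (rule ennreal_leI)
      also have "\<dots> = ennreal (2 ^ m) * (ennreal (g e ^ m) + ennreal (u y ^ m))"
        using nonneg by (simp add: ennreal_mult)
      finally show ?thesis .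
    qed
    have inner: "(\<integral>\<^sup>+\<omega>. ennreal ((g (eps 0 \<omega>) + u y) ^ m) \<partial>M) \<le> ennreal (2 ^ m) * (G + ennreal (u y ^ m))" for y
    proof -
      have "(\<integral>\<^sup>+\<omega>. ennreal ((g (eps 0 \<omega>) + u y) ^ m) \<partial>M)
          \<le> (\<integral>\<^sup>+\<omega>. ennreal (2 ^ m) * (ennreal (g (eps 0 \<omega>) ^ m) + ennreal (u y ^ m)) \<partial>M)"
        by (rule nn_integral_mono) (rule pt)
      also have "\<dots> = ennreal (2 ^ m) * (G + ennreal (u y ^ m))"
        by (simp add: nn_integral_cmult nn_integral_add G_def emeasure_space_1)
      finally show ?thesis .
    qed
    have "A \<le> (\<integral>\<^sup>+\<omega>'. ennreal (2 ^ m) * (G + ennreal (u (x 0 \<omega>') ^ m)) \<partial>M)"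
      unfolding A_def by (rule nn_integral_mono) (rule inner)
    also have "\<dots> = ennreal (2 ^ m) * (G + U)"
      by (simp add: nn_integral_cmult nn_integral_add U_def emeasure_space_1)
    also have "\<dots> < \<infinity>"
      using mom_g[of 0] mom_u[of 0] by (simp add: G_def U_def ennreal_mult_less_top)
    finally show ?thesis .
  qed
  have pos: "A * MU \<noteq> 0"
  proof
    assume h: "A * MU = 0"
    have "AE \<omega> in M. T k \<omega> = 0" for k
    proof -
      have "(\<integral>\<^sup>+\<omega>. ennreal (T k \<omega> ^ m) \<partial>M) = 0" using h by (simp add: ET mult.assoc)
      then have "AE \<omega> in M. ennreal (T k \<omega> ^ m) = 0" by (subst (asm) nn_integral_0_iff_AE) simp_all
      then show ?thesis
      proof eventually_elim
        case (elim \<omega>)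
        then have "T k \<omega> ^ m \<le> 0" using ennreal_eq_0_iff by blast
        then show ?case using Tpos[of k \<omega>] m
          by (metis antisym not_one_le_zero power_eq_0_iff zero_le_power)
      qed
    qed
    then have "AE \<omega> in M. \<forall>k. T k \<omega> = 0" by (simp add: AE_all_countable)
    then have ae0: "AE \<omega> in M. eps t \<omega> = 0" using AE1
    proof eventually_elim
      case (elim \<omega>)
      then have "(\<lambda>k. T k \<omega>) sums 0" by simp
      then have "S \<omega> = 0" using elim sums_unique2 by blast
      moreover have "sigma t \<omega> powr \<delta> > 0" using elim by simp
      ultimately have "D \<omega> = 0" by (simp add: S_def)
      then show ?case by (simp add: D_def)
    qed
    have "(\<integral>\<omega>. (eps t \<omega>)\<^sup>2 \<partial>M) = (\<integral>\<omega>. 0 \<partial>M)"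
    proof (rule integral_cong_AE)
      show "AE \<omega> in M. (eps t \<omega>)\<^sup>2 = 0" using ae0 by eventually_elim simp
    qed simp_all
    then show False using eps_var[of t] by simp
  qed
  show ?thesis
  proof
    assume fin: "(\<integral>\<^sup>+\<omega>. ennreal (\<bar>R t \<omega>\<bar> powr (real m * \<delta>)) \<partial>M) < \<infinity>"
    show "(\<integral>\<^sup>+\<omega>. ennreal (c (eps t \<omega>) ^ m) \<partial>M) < 1"
      unfolding Q_def[symmetric]
    proof (rule ccontr)
      assume "\<not> Q < 1"
      then have Q1: "1 \<le> Q" by simp
      have "(\<integral>\<^sup>+\<omega>. ennreal (S \<omega> ^ m) \<partial>M) < \<infinity>" using fin LHS by simp
      with lower have sum_fin: "(\<Sum>k. Q ^ k * A * MU) < \<infinity>" by (rule le_less_trans)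
      have "Q ^ 0 * A * MU < \<infinity>" using ennreal_suminf_lessD[OF sum_fin, of 0] .
      then have "A * MU < \<infinity>" by simp
      then have "A * MU < top" by simp
      then have "\<exists>r\<ge>0. A * MU = ennreal r" by (rule iffD1[OF less_top_ennreal])
      then obtain cc where cc: "A * MU = ennreal cc" "cc \<ge> 0" by blast
      have le: "(\<Sum>k. ennreal cc) \<le> (\<Sum>k. Q ^ k * A * MU)"
      proof (rule suminf_le)
        fix k
        have "1 * (A * MU) \<le> Q ^ k * (A * MU)"
          using Q1 by (intro mult_right_mono one_le_power) auto
        then have "A * MU \<le> Q ^ k * (A * MU)" by simp
        then show "ennreal cc \<le> Q ^ k * A * MU" by (simp add: cc(1)[symmetric] mult.assoc)
      next
        show "summable (\<lambda>k. ennreal cc)" by (rule summableI)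
      next
        show "summable (\<lambda>k. Q ^ k * A * MU)" by (rule summableI)
      qed
      have "(\<Sum>k. ennreal cc) < \<infinity>" using le sum_fin by (rule le_less_trans)
      then have "(\<Sum>k. ennreal cc) \<noteq> top" by simp
      then have "summable (\<lambda>k. cc)" using summable_suminf_not_top[of "\<lambda>k. cc"] cc(2) by blast
      then have "cc = 0" by (simp add: summable_const_iff)
      with pos cc show False by simp
    qed
  next
    assume "(\<integral>\<^sup>+\<omega>. ennreal (c (eps t \<omega>) ^ m) \<partial>M) < 1"
    then have Qlt: "Q < 1" by (simp add: Q_def)
    have "Q < top" using Qlt top_greatest by (rule less_le_trans)
    then have "\<exists>r\<ge>0. Q = ennreal r" by (rule iffD1[OF less_top_ennreal])
    then obtain q where q: "Q = ennreal q" "q \<ge> 0" by blast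
    have "ennreal q < ennreal 1" using Qlt q(1) by simp
    then have q1: "q < 1" using ennreal_less_iff[OF q(2)] by blast
    define r where "r = 1 - (1 - q) / (2 * real m)"
    have mpos: "real m \<ge> 1" using m by simp
    have r0: "0 < r" "r < 1" using q1 q mpos by (auto simp: r_def field_simps)
    have qr: "q < r ^ (m - 1)"
    proof -
      have "1 + real (m - 1) * (- ((1 - q) / (2 * real m))) \<le> (1 + (- ((1 - q) / (2 * real m)))) ^ (m - 1)"
        using q1 q mpos by (intro Bernoulli_inequality) (auto simp: field_simps)
      moreover have "q < 1 + real (m - 1) * (- ((1 - q) / (2 * real m)))"
      proof -
        have qm: "q * real m < real m" using q1 mpos by simp
        show ?thesis using q1 q mpos m apply (simp add: of_nat_diff field_simps) using qm q1 by linarith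
      qed
      ultimately show ?thesis by (simp add: r_def)
    qed
    define z where "z = q * (1 / r) ^ (m - 1)"
    have z: "0 \<le> z" "z < 1" using q qr r0 by (auto simp: z_def field_simps)
    define K where "K = (1 / (1 - r)) ^ (m - 1)"
    have "(\<integral>\<^sup>+\<omega>. ennreal (S \<omega> ^ m) \<partial>M)
        \<le> (\<integral>\<^sup>+\<omega>. ennreal K * (\<Sum>k. ennreal (T k \<omega> ^ m * (1 / r) ^ (k * (m - 1)))) \<partial>M)"
    proof (rule nn_integral_mono_AE)
      show "AE \<omega> in M. ennreal (S \<omega> ^ m) \<le> ennreal K * (\<Sum>k. ennreal (T k \<omega> ^ m * (1 / r) ^ (k * (m - 1))))"
        using AE1
      proof eventually_elim
        case (elim \<omega>)
        have "(\<lambda>k. T k \<omega>) sums S \<omega>" using elim by blast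
        then show ?case unfolding K_def by (rule upper_pt[OF Tpos _ m r0])
      qed
    qed
    also have "\<dots> = ennreal K * (\<Sum>k. \<integral>\<^sup>+\<omega>. ennreal (T k \<omega> ^ m * (1 / r) ^ (k * (m - 1))) \<partial>M)"
      by (simp add: nn_integral_cmult nn_integral_suminf)
    also have "\<dots> = ennreal K * (\<Sum>k. ennreal (z ^ k) * (A * MU))"
    proof -
      have "(\<integral>\<^sup>+\<omega>. ennreal (T k \<omega> ^ m * (1 / r) ^ (k * (m - 1))) \<partial>M) = ennreal (z ^ k) * (A * MU)" for k
      proof -
        have "(\<integral>\<^sup>+\<omega>. ennreal (T k \<omega> ^ m * (1 / r) ^ (k * (m - 1))) \<partial>M)
            = (\<integral>\<^sup>+\<omega>. ennreal (T k \<omega> ^ m) * ennreal ((1 / r) ^ (k * (m - 1))) \<partial>M)"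
          using r0 by (simp add: ennreal_mult'')
        also have "\<dots> = Q ^ k * A * MU * ennreal ((1 / r) ^ (k * (m - 1)))"
          by (simp add: nn_integral_multc ET)
        also have "\<dots> = ennreal (q ^ k * (1 / r) ^ (k * (m - 1))) * (A * MU)"
          using q r0 by (simp add: ennreal_mult ennreal_power mult_ac)
        also have "q ^ k * (1 / r) ^ (k * (m - 1)) = z ^ k"
        proof -
          have "(1 / r) ^ (k * (m - 1)) = ((1 / r) ^ (m - 1)) ^ k"
            by (metis mult.commute power_mult)
          then show ?thesis by (simp add: z_def power_mult_distrib)
        qed
        finally show ?thesis .
      qed
      then show ?thesis by simp
    qed
    also have "\<dots> = ennreal K * ((\<Sum>k. ennreal (z ^ k)) * (A * MU))" by simp
    also have "\<dots> < \<infinity>"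
      using geom_ennreal[OF z] A_fin MU_fin by (simp add: ennreal_mult_less_top)
    finally show "(\<integral>\<^sup>+\<omega>. ennreal (\<bar>R t \<omega>\<bar> powr (real m * \<delta>)) \<partial>M) < \<infinity>" using LHS by simp
  qed
qed


end
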